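(* Let $\mathcal S=\{x\in\mathbb R^n:x^TMx-2\beta^Tx+\gamma\le0\}$ be a paraboloid, let $\lambda_1$ be the largest eigenvalue of $M$, and let $u_n$ be the unit vector with $Mu_n=0$ and $\beta^Tu_n>0$ (so that $\mathrm{rec.cone}(\mathcal S)=\{tu_n:t\ge0\}$). (i) For every boundary point $\check x$ of $\mathcal S$ with $\|M\check x-\beta\|_2\ge\lambda_1\frac{\sqrt n}{2}$, there is $x\in\mathcal S\cap\mathbb Z^n$ with $\|x-\check x\|_2\le\sqrt n$. (ii) Let $\alpha\in\mathbb R^n$ with $u_n^T\alpha>0$, and let $\hat x$ be the minimizer of $\alpha^Tx$ over $\mathcal S$. Then $\dfrac{u_n^T\alpha}{\|\alpha\|_2}\le\dfrac{u_n^T\beta}{\lambda_1\sqrt n/2}$ holds if and only if $\|M\hat x-\beta\|_2\ge\lambda_1\frac{\sqrt n}2$; and in that case $$\min_{x\in\mathcal S\cap\mathbb Z^n}\alpha^Tx-\min_{x\in\mathcal S}\alpha^Tx\le\|\alpha\|_2\sqrt n .$$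
   Context: Paraboloid: $M\in\mathbb S^n$ is positive semidefinite of rank $n-1$, $\beta\in\mathbb R^n$, $\gamma\in\mathbb R$, and the linear system $Mx=\beta$ has no solution. *)

theory Defs
  imports "HOL-Analysis.Analysis"
begin

definition quad_set :: "real^'n^'n \<Rightarrow> real^'n \<Rightarrow> real \<Rightarrow> (real^'n) set" where
  "quad_set M \<beta> \<gamma> = {x. x \<bullet> (M *v x) - 2 * (\<beta> \<bullet> x) + \<gamma> \<le> 0}"

definition is_paraboloid :: "real^'n^'n \<Rightarrow> real^'n \<Rightarrow> bool" where
  "is_paraboloid M \<beta> \<longleftrightarrow> transpose M = M \<and> (\<forall>x. 0 \<le> x \<bullet> (M *v x))
     \<and> rank M = CARD('n) - 1 \<and> \<not> (\<exists>x. M *v x = \<beta>)"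

definition eigenvalue_of :: "real^'n^'n \<Rightarrow> real \<Rightarrow> bool" where
  "eigenvalue_of M l \<longleftrightarrow> (\<exists>v. v \<noteq> 0 \<and> M *v v = l *\<^sub>R v)"

definition largest_eigenvalue :: "real^'n^'n \<Rightarrow> real" where
  "largest_eigenvalue M = Max {l. eigenvalue_of M l}"

definition integer_vector :: "real^'n \<Rightarrow> bool" where
  "integer_vector x \<longleftrightarrow> (\<forall>i. x $ i \<in> \<int>)"

end

theory Submission
  imports Defs
begin

lemma sym_inner:
  fixes M :: "real^'n^'n"
  assumes "transpose M = M"
  shows "(M *v x) \<bullet> y = x \<bullet> (M *v y)"
proof -
  have "(M *v x) \<bullet> y = (x v* transpose M) \<bullet> y" by simp
  also have "\<dots> = x \<bullet> (transpose M *v y)" by (rule dot_lmul_matrix)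
  finally show ?thesis using assms by simp
qed

lemma psd_null:
  fixes f :: "real^'n \<Rightarrow> real^'n"
  assumes lin: "\<And>x y (t::real). f (x + t *\<^sub>R y) = f x + t *\<^sub>R f y"
    and sym: "\<And>x y. f x \<bullet> y = x \<bullet> f y"
    and psd: "\<And>x. 0 \<le> x \<bullet> f x"
    and z: "v \<bullet> f v = 0"
  shows "f v = 0"
proof (rule ccontr)
  assume ne: "f v \<noteq> 0"
  define w where "w = f v"
  define a where "a = w \<bullet> w"
  define b where "b = w \<bullet> f w"
  have a: "a > 0" using ne by (simp add: a_def w_def)
  have b: "b \<ge> 0" using psd by (simp add: b_def)
  have "\<And>t. (v + t *\<^sub>R w) \<bullet> f (v + t *\<^sub>R w) = 2 * t * a + t^2 * b"
  proof -
    fix t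
    have "(v + t *\<^sub>R w) \<bullet> f (v + t *\<^sub>R w) = (v + t *\<^sub>R w) \<bullet> (f v + t *\<^sub>R f w)" by (simp add: lin)
    also have "\<dots> = v \<bullet> f v + t * (v \<bullet> f w) + t * (w \<bullet> f v) + t^2 * (w \<bullet> f w)"
      by (simp add: inner_add_left inner_add_right power2_eq_square algebra_simps)
    also have "v \<bullet> f w = w \<bullet> f v" using sym[of w v] by (simp add: inner_commute)
    finally show "(v + t *\<^sub>R w) \<bullet> f (v + t *\<^sub>R w) = 2 * t * a + t^2 * b"
      using z by (simp add: a_def b_def w_def)
  qed
  hence ge: "\<And>t. 0 \<le> 2 * t * a + t^2 * b" using psd by metis
  define t where "t = - a / (b + 1)"
  have tneg: "t < 0" using a b by (simp add: t_def)
  have "t * b = - a * (b / (b+1))" by (simp add: t_def)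
  moreover have "b / (b+1) \<le> 1" using b by simp
  moreover have "a * (b / (b+1)) \<le> a * 1" using a by (intro mult_left_mono) (use b in auto)
  ultimately have "t * b \<ge> - a" by simp
  hence "2 * a + t * b > 0" using a by linarith
  hence "t * (2 * a + t * b) < 0" using tneg by (simp add: mult_neg_pos)
  moreover have "2 * t * a + t^2 * b = t * (2 * a + t * b)" by (simp add: power2_eq_square algebra_simps)
  ultimately show False using ge[of t] by simp
qed

lemma mv_lin: "(M::real^'n^'n) *v (x + t *\<^sub>R y) = M *v x + t *\<^sub>R (M *v y)"
  by (simp add: matrix_vector_right_distrib matrix_vector_mult_scaleR)

lemma mv_scale: "(M::real^'n^'n) *v (t *\<^sub>R y) = t *\<^sub>R (M *v y)"
  by (simp add: matrix_vector_mult_scaleR)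

lemma rayleigh:
  fixes M :: "real^'n^'n"
  assumes sym: "transpose M = M"
  obtains v \<mu> where "norm v = 1" "M *v v = \<mu> *\<^sub>R v" "\<And>x. x \<bullet> (M *v x) \<le> \<mu> * (norm x)^2"
proof -
  have cont: "continuous_on (sphere (0::real^'n) 1) (\<lambda>x. x \<bullet> (M *v x))"
    by (intro continuous_intros linear_continuous_on matrix_vector_mul_bounded_linear)
  obtain v where v: "v \<in> sphere 0 1" "\<And>y. y \<in> sphere 0 1 \<Longrightarrow> y \<bullet> (M *v y) \<le> v \<bullet> (M *v v)"
    using continuous_attains_sup[OF compact_sphere _ cont] by auto
  define \<mu> where "\<mu> = v \<bullet> (M *v v)"
  have nv: "norm v = 1" using v by simp
  have bound: "x \<bullet> (M *v x) \<le> \<mu> * (norm x)^2" for x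
  proof (cases "x = 0")
    case True then show ?thesis by simp
  next
    case False
    define y where "y = (1 / norm x) *\<^sub>R x"
    have "y \<in> sphere 0 1" using False by (simp add: y_def)
    hence "y \<bullet> (M *v y) \<le> \<mu>" using v by (simp add: \<mu>_def)
    moreover have "y \<bullet> (M *v y) = x \<bullet> (M *v x) / (norm x)^2"
      by (simp add: y_def mv_scale power2_eq_square)
    ultimately show ?thesis using False by (simp add: field_simps)
  qed
  have "(\<lambda>x. \<mu> *\<^sub>R x - M *v x) v = 0"
  proof (rule psd_null[where f="\<lambda>x. \<mu> *\<^sub>R x - M *v x"])
    show "\<mu> *\<^sub>R (x + t *\<^sub>R y) - M *v (x + t *\<^sub>R y) = (\<mu> *\<^sub>R x - M *v x) + t *\<^sub>R (\<mu> *\<^sub>R y - M *v y)" for x y t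
      by (simp add: mv_lin algebra_simps)
    show "(\<mu> *\<^sub>R x - M *v x) \<bullet> y = x \<bullet> (\<mu> *\<^sub>R y - M *v y)" for x y
      using sym_inner[OF sym, of x y] by (simp add: inner_diff_left inner_diff_right)
    show "0 \<le> x \<bullet> (\<mu> *\<^sub>R x - M *v x)" for x
      using bound[of x] by (simp add: inner_diff_right dot_square_norm power2_eq_square)
    show "v \<bullet> (\<mu> *\<^sub>R v - M *v v) = 0"
      using nv by (simp add: inner_diff_right \<mu>_def dot_square_norm)
  qed
  hence "M *v v = \<mu> *\<^sub>R v" by simp
  with nv bound that show ?thesis by blast
qed

lemma eig_finite:
  fixes M :: "real^'n^'n"
  assumes sym: "transpose M = M"
  shows "finite {l. eigenvalue_of M l}"
proof -
  define S where "S = {l. eigenvalue_of M l}"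
  define ev where "ev l = (SOME v. v \<noteq> 0 \<and> M *v v = l *\<^sub>R v)" for l
  have ev: "ev l \<noteq> 0 \<and> M *v ev l = l *\<^sub>R ev l" if "l \<in> S" for l
    proof -
    from that obtain v where "v \<noteq> 0 \<and> M *v v = l *\<^sub>R v" unfolding S_def eigenvalue_of_def by auto
    thus ?thesis unfolding ev_def by (rule someI)
  qed
  have inj: "inj_on ev S"
  proof (rule inj_onI)
    fix a b assume a: "a \<in> S" and b: "b \<in> S" and e: "ev a = ev b"
    have "a *\<^sub>R ev a = b *\<^sub>R ev a" using ev[OF a] ev[OF b] e by metis
    thus "a = b" using ev[OF a] by simp
  qed
  have orth: "pairwise orthogonal (ev ` S)"
  proof (clarsimp simp: pairwise_def)
    fix a b assume a: "a \<in> S" and b: "b \<in> S" and ne: "ev a \<noteq> ev b"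
    hence "a \<noteq> b" by auto
    have "(M *v ev a) \<bullet> ev b = ev a \<bullet> (M *v ev b)" by (rule sym_inner[OF sym])
    hence "a * (ev a \<bullet> ev b) = b * (ev a \<bullet> ev b)" using ev[OF a] ev[OF b] by simp
    hence "ev a \<bullet> ev b = 0" using \<open>a \<noteq> b\<close> by simp
    thus "orthogonal (ev a) (ev b)" by (simp add: orthogonal_def)
  qed
  have "0 \<notin> ev ` S" using ev by auto
  hence "independent (ev ` S)" using orth pairwise_orthogonal_independent by blast
  hence "finite (ev ` S)" using independent_bound by blast
  hence "finite S" using inj finite_imageD by blast
  thus ?thesis by (simp add: S_def)
qed


lemma lam_facts:
  fixes M :: "real^'n^'n"
  assumes n2: "CARD('n) \<ge> 2" and par: "is_paraboloid M \<beta>"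
  shows "largest_eigenvalue M > 0" "\<And>x. x \<bullet> (M *v x) \<le> largest_eigenvalue M * (norm x)^2"
proof -
  have sym: "transpose M = M" and psd: "\<And>x. 0 \<le> x \<bullet> (M *v x)" and rk: "rank M = CARD('n) - 1"
    using par by (auto simp: is_paraboloid_def)
  obtain v \<mu> where nv: "norm v = 1" and ev: "M *v v = \<mu> *\<^sub>R v" and bd: "\<And>x. x \<bullet> (M *v x) \<le> \<mu> * (norm x)^2"
    using rayleigh[OF sym] by blast
  have "eigenvalue_of M \<mu>" unfolding eigenvalue_of_def using nv ev by (intro exI[of _ v]) auto
  hence mu_le: "\<mu> \<le> largest_eigenvalue M"
    unfolding largest_eigenvalue_def using eig_finite[OF sym] by (intro Max_ge) auto
  have mu_pos: "\<mu> > 0"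
  proof (rule ccontr)
    assume "\<not> \<mu> > 0"
    hence z: "x \<bullet> (M *v x) = 0" for x using bd[of x] psd[of x]
      by (smt (verit) mult_nonpos_nonneg zero_le_power2)
    have "M *v x = 0" for x
      by (rule psd_null[where f="\<lambda>x. M *v x"]) (auto simp: mv_lin sym_inner[OF sym] psd z)
    hence "M = 0" by (simp add: matrix_eq)
    hence "rank M = 0" by simp
    with rk n2 show False by simp
  qed
  show "largest_eigenvalue M > 0" using mu_pos mu_le by simp
  show "x \<bullet> (M *v x) \<le> largest_eigenvalue M * (norm x)^2" for x
    using bd[of x] mu_le by (smt (verit) mult_right_mono zero_le_power2)
qed

lemma round_vec:
  fixes c :: "real^'n"
  shows "\<exists>x. integer_vector x \<and> norm (x - c) \<le> sqrt (CARD('n)) / 2"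
proof -
  define x :: "real^'n" where "x = (\<chi> i. of_int (round (c $ i)))"
  have iv: "integer_vector x" by (simp add: integer_vector_def x_def)
  have "(x - c) \<bullet> (x - c) = (\<Sum>i\<in>UNIV. (x $ i - c $ i)^2)"
    by (simp add: inner_vec_def power2_eq_square)
  also have "\<dots> \<le> (\<Sum>i\<in>(UNIV::'n set). 1/4)"
  proof (rule sum_mono)
    fix i
    have "\<bar>x $ i - c $ i\<bar> \<le> 1/2" using of_int_round_abs_le[of "c $ i"] by (simp add: x_def)
    hence "\<bar>x $ i - c $ i\<bar>^2 \<le> (1/2)^2" by (intro power_mono) auto
    thus "(x $ i - c $ i)^2 \<le> 1/4" by (simp add: power2_abs power_divide)
  qed
  also have "\<dots> = CARD('n) / 4" by simp
  finally have "norm (x - c) \<le> sqrt (CARD('n) / 4)"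
    by (simp add: norm_eq_sqrt_inner)
  also have "\<dots> = sqrt (CARD('n)) / 2" by (simp add: real_sqrt_divide)
  finally show ?thesis using iv by blast
qed

lemma quad_expand:
  fixes M :: "real^'n^'n"
  assumes sym: "transpose M = M"
  shows "(y + h) \<bullet> (M *v (y + h)) - 2 * (\<beta> \<bullet> (y + h)) + \<gamma>
     = (y \<bullet> (M *v y) - 2 * (\<beta> \<bullet> y) + \<gamma>) + 2 * ((M *v y - \<beta>) \<bullet> h) + h \<bullet> (M *v h)"
proof -
  have "h \<bullet> (M *v y) = (M *v y) \<bullet> h" by (simp add: inner_commute)
  moreover have "y \<bullet> (M *v h) = (M *v y) \<bullet> h" using sym_inner[OF sym, of y h] by simp
  ultimately show ?thesis
    by (simp add: matrix_vector_right_distrib inner_add_left inner_add_right inner_diff_left algebra_simps)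
qed


lemma near_int:
  fixes M :: "real^'n^'n"
  assumes n2: "CARD('n) \<ge> 2" and par: "is_paraboloid M \<beta>"
    and xc: "xc \<in> quad_set M \<beta> \<gamma>"
    and big: "norm (M *v xc - \<beta>) \<ge> largest_eigenvalue M * sqrt (CARD('n)) / 2"
  shows "\<exists>x \<in> quad_set M \<beta> \<gamma>. integer_vector x \<and> norm (x - xc) \<le> sqrt (CARD('n))"
proof -
  have sym: "transpose M = M" and nosol: "\<not> (\<exists>x. M *v x = \<beta>)"
    using par by (auto simp: is_paraboloid_def)
  define lam where "lam = largest_eigenvalue M"
  have lam: "lam > 0" and qb: "\<And>x. x \<bullet> (M *v x) \<le> lam * (norm x)^2"
    using lam_facts[OF n2 par] by (auto simp: lam_def)
  define r where "r = sqrt (CARD('n)) / 2"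
  have r0: "r \<ge> 0" by (simp add: r_def)
  define w where "w = M *v xc - \<beta>"
  define W where "W = norm w"
  have wne: "w \<noteq> 0" using nosol by (auto simp: w_def)
  hence W0: "W > 0" by (simp add: W_def)
  have bigW: "lam * r \<le> W" using big by (simp add: W_def w_def lam_def r_def)
  define d where "d = (- 1 / W) *\<^sub>R w"
  have nd: "norm d = 1" using W0 by (simp add: d_def W_def)
  have wd: "w = (- W) *\<^sub>R d" using W0 by (simp add: d_def)
  obtain x where xi: "integer_vector x" and xz: "norm (x - (xc + r *\<^sub>R d)) \<le> r"
    using round_vec[of "xc + r *\<^sub>R d"] by (auto simp: r_def)
  define z where "z = x - (xc + r *\<^sub>R d)"
  define h where "h = r *\<^sub>R d + z"
  have xh: "x = xc + h" by (simp add: h_def z_def)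
  define t where "t = d \<bullet> z"
  define Z where "Z = norm z"
  have Zr: "Z \<le> r" using xz by (simp add: Z_def z_def)
  have tZ: "\<bar>t\<bar> \<le> Z" using Cauchy_Schwarz_ineq2[of d z] nd by (simp add: t_def Z_def)
  have dist: "norm (x - xc) \<le> sqrt (CARD('n))"
  proof -
    have "norm (x - xc) = norm h" by (simp add: xh)
    also have "\<dots> \<le> norm (r *\<^sub>R d) + norm z" unfolding h_def by (rule norm_triangle_ineq)
    also have "\<dots> = r + Z" using nd r0 by (simp add: Z_def)
    also have "\<dots> \<le> sqrt (CARD('n))" using Zr by (simp add: r_def)
    finally show ?thesis .
  qed
  have gx: "xc \<bullet> (M *v xc) - 2 * (\<beta> \<bullet> xc) + \<gamma> \<le> 0" using xc by (simp add: quad_set_def)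
  have wh: "w \<bullet> h = - W * (r + t)"
    using nd by (simp add: wd h_def t_def inner_add_right dot_square_norm algebra_simps)
  have hh: "(norm h)^2 = r^2 + 2 * r * t + Z^2"
  proof -
    have dd: "d \<bullet> d = 1" using nd by (simp add: dot_square_norm)
    have "(norm h)^2 = h \<bullet> h" by (simp add: power2_norm_eq_inner)
    also have "\<dots> = r^2 * (d \<bullet> d) + 2 * r * (d \<bullet> z) + z \<bullet> z"
      by (simp add: h_def inner_add_left inner_add_right inner_commute power2_eq_square algebra_simps)
    finally show ?thesis using dd by (simp add: t_def Z_def power2_norm_eq_inner)
  qed
  have rt: "r + t \<ge> 0" using tZ Zr by linarith
  have Z2: "Z^2 \<le> r^2" using Zr by (simp add: Z_def power_mono)
  have "x \<bullet> (M *v x) - 2 * (\<beta> \<bullet> x) + \<gamma>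
      = (xc \<bullet> (M *v xc) - 2 * (\<beta> \<bullet> xc) + \<gamma>) + 2 * (w \<bullet> h) + h \<bullet> (M *v h)"
    unfolding xh w_def by (rule quad_expand[OF sym])
  also have "\<dots> \<le> 2 * (w \<bullet> h) + lam * (norm h)^2" using gx qb[of h] by linarith
  also have "\<dots> = -2 * W * (r + t) + lam * (r^2 + 2 * r * t + Z^2)" by (simp add: wh hh)
  also have "\<dots> \<le> -2 * W * (r + t) + lam * (2 * r * (r + t))"
    using Z2 lam by (simp add: algebra_simps power2_eq_square)
  also have "\<dots> = 2 * (r + t) * (lam * r - W)" by (simp add: algebra_simps)
  also have "\<dots> \<le> 0" using rt bigW by (simp add: mult_nonneg_nonpos)
  finally have "x \<in> quad_set M \<beta> \<gamma>" by (simp add: quad_set_def)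
  with xi dist show ?thesis by blast
qed


lemma kkt:
  fixes M :: "real^'n^'n"
  assumes par: "is_paraboloid M \<beta>"
    and u_ker: "M *v u = 0" and u_pos: "\<beta> \<bullet> u > 0"
    and ua: "u \<bullet> \<alpha> > 0" and xhS: "xh \<in> quad_set M \<beta> \<gamma>"
    and minz: "\<forall>x \<in> quad_set M \<beta> \<gamma>. \<alpha> \<bullet> xh \<le> \<alpha> \<bullet> x"
  shows "norm (M *v xh - \<beta>) = norm \<alpha> * (u \<bullet> \<beta>) / (u \<bullet> \<alpha>)"
proof -
  have sym: "transpose M = M" and nosol: "\<not> (\<exists>x. M *v x = \<beta>)" and psd: "\<And>x. 0 \<le> x \<bullet> (M *v x)"
    using par by (auto simp: is_paraboloid_def)
  define w where "w = M *v xh - \<beta>"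
  have wne: "w \<noteq> 0" using nosol by (auto simp: w_def)
  hence ww: "w \<bullet> w > 0" by simp
  have gx: "xh \<bullet> (M *v xh) - 2 * (\<beta> \<bullet> xh) + \<gamma> \<le> 0" using xhS by (simp add: quad_set_def)
  have A: "\<alpha> \<bullet> h \<ge> 0" if wh: "w \<bullet> h < 0" for h
  proof -
    define q where "q = h \<bullet> (M *v h)"
    have q0: "q \<ge> 0" using psd by (simp add: q_def)
    define s where "s = - (w \<bullet> h) / (q + 1)"
    have s0: "s > 0" using wh q0 by (simp add: s_def divide_neg_pos)
    have "s * q = - (w \<bullet> h) * (q / (q + 1))" by (simp add: s_def)
    moreover have "q / (q+1) \<le> 1" using q0 by simp
    moreover have "- (w \<bullet> h) * (q / (q + 1)) \<le> - (w \<bullet> h) * 1" using wh q0 by (intro mult_left_mono) auto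
    ultimately have sq: "s * q \<le> - (w \<bullet> h)" by simp
    have "2 * (s * (w \<bullet> h)) + s^2 * q = s * (2 * (w \<bullet> h) + s * q)" by (simp add: power2_eq_square algebra_simps)
    also have "\<dots> \<le> 0" using s0 sq wh by (intro mult_nonneg_nonpos) auto
    finally have neg: "2 * (s * (w \<bullet> h)) + s^2 * q \<le> 0" .
    have "(xh + s *\<^sub>R h) \<bullet> (M *v (xh + s *\<^sub>R h)) - 2 * (\<beta> \<bullet> (xh + s *\<^sub>R h)) + \<gamma>
       = (xh \<bullet> (M *v xh) - 2 * (\<beta> \<bullet> xh) + \<gamma>) + 2 * (w \<bullet> (s *\<^sub>R h)) + (s *\<^sub>R h) \<bullet> (M *v (s *\<^sub>R h))"
      unfolding w_def by (rule quad_expand[OF sym])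
    also have "\<dots> = (xh \<bullet> (M *v xh) - 2 * (\<beta> \<bullet> xh) + \<gamma>) + (2 * (s * (w \<bullet> h)) + s^2 * q)"
      by (simp add: mv_scale q_def power2_eq_square)
    also have "\<dots> \<le> 0" using gx neg by linarith
    finally have "xh + s *\<^sub>R h \<in> quad_set M \<beta> \<gamma>" by (simp add: quad_set_def)
    hence "\<alpha> \<bullet> xh \<le> \<alpha> \<bullet> (xh + s *\<^sub>R h)" using minz by blast
    hence "0 \<le> s * (\<alpha> \<bullet> h)" by (simp add: inner_add_right)
    thus ?thesis using s0 by (simp add: zero_le_mult_iff)
  qed
  have aw: "\<alpha> \<bullet> w \<le> 0" using A[of "- w"] ww by simp
  have B: "\<alpha> \<bullet> h \<ge> 0" if wh: "w \<bullet> h = 0" for h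
  proof (rule ccontr)
    assume "\<not> \<alpha> \<bullet> h \<ge> 0"
    hence ah: "\<alpha> \<bullet> h < 0" by simp
    define e where "e = - (\<alpha> \<bullet> h) / (2 * (\<bar>\<alpha> \<bullet> w\<bar> + 1))"
    have e0: "e > 0" using ah by (simp add: e_def divide_neg_pos add_nonneg_pos)
    have "w \<bullet> (h - e *\<^sub>R w) < 0" using wh e0 ww by (simp add: inner_diff_right)
    hence "\<alpha> \<bullet> (h - e *\<^sub>R w) \<ge> 0" by (rule A)
    hence "\<alpha> \<bullet> h \<ge> e * (\<alpha> \<bullet> w)" by (simp add: inner_diff_right)
    moreover have "e * (\<alpha> \<bullet> w) \<ge> - e * \<bar>\<alpha> \<bullet> w\<bar>" using e0 by (simp add: abs_if)
    moreover have "e * \<bar>\<alpha> \<bullet> w\<bar> < - (\<alpha> \<bullet> h)"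
    proof -
      have "e * \<bar>\<alpha> \<bullet> w\<bar> \<le> e * (\<bar>\<alpha> \<bullet> w\<bar> + 1)" using e0 by simp
      also have "\<dots> = - (\<alpha> \<bullet> h) / 2" proof - have "\<bar>\<alpha> \<bullet> w\<bar> + 1 \<noteq> 0" by linarith thus ?thesis by (simp add: e_def field_simps) qed
      also have "\<dots> < - (\<alpha> \<bullet> h)" using ah by simp
      finally show ?thesis .
    qed
    ultimately show False by linarith
  qed
  define c where "c = (\<alpha> \<bullet> w) / (w \<bullet> w)"
  define h where "h = \<alpha> - c *\<^sub>R w"
  have cw: "c * (w \<bullet> w) = \<alpha> \<bullet> w" using ww by (simp add: c_def)
  have wh0: "w \<bullet> h = 0" using cw by (simp add: h_def inner_diff_right inner_commute)
  have "\<alpha> \<bullet> h = 0" using B[OF wh0] B[of "- h"] wh0 by simp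
  hence "h \<bullet> h = 0" using wh0 by (simp add: h_def inner_diff_left inner_commute)
  hence ac: "\<alpha> = c *\<^sub>R w" by (simp add: h_def)
  have anz: "\<alpha> \<noteq> 0" using ua by auto
  have cle: "c \<le> 0" using aw ww by (simp add: c_def divide_nonpos_pos)
  have cne: "c \<noteq> 0" using ac anz by auto
  have uM: "u \<bullet> (M *v xh) = 0" using sym_inner[OF sym, of u xh] u_ker by simp
  have "u \<bullet> \<alpha> = c * (u \<bullet> w)" by (simp add: ac)
  also have "\<dots> = - c * (u \<bullet> \<beta>)" by (simp add: w_def inner_diff_right uM)
  finally have uac: "u \<bullet> \<alpha> = - c * (u \<bullet> \<beta>)" .
  have na: "norm \<alpha> = - c * norm w" using cle by (simp add: ac)
  have ub: "u \<bullet> \<beta> > 0" using u_pos by (simp add: inner_commute)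
  have "norm \<alpha> * (u \<bullet> \<beta>) / (u \<bullet> \<alpha>) = norm w"
    using cle cne ub by (simp add: na uac)
  thus ?thesis by (simp add: w_def)
qed


lemma quad_closed: "closed (quad_set (M::real^'n^'n) \<beta> \<gamma>)"
  unfolding quad_set_def
  by (intro closed_Collect_le continuous_intros linear_continuous_on matrix_vector_mul_bounded_linear)

theorem proposition6p4:
  fixes M :: "real^'n^'n" and \<beta> u :: "real^'n" and \<gamma> :: real
  assumes n2: "CARD('n) \<ge> 2"
    and par: "is_paraboloid M \<beta>"
    and u_unit: "norm u = 1" and u_ker: "M *v u = 0" and u_pos: "\<beta> \<bullet> u > 0"
  shows
    "(\<forall>xc \<in> frontier (quad_set M \<beta> \<gamma>).
        norm (M *v xc - \<beta>) \<ge> largest_eigenvalue M * sqrt (CARD('n)) / 2 \<longrightarrow>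
        (\<exists>x \<in> quad_set M \<beta> \<gamma>. integer_vector x \<and> norm (x - xc) \<le> sqrt (CARD('n))))
   \<and> (\<forall>\<alpha> xh. u \<bullet> \<alpha> > 0 \<and> xh \<in> quad_set M \<beta> \<gamma> \<and> (\<forall>x \<in> quad_set M \<beta> \<gamma>. \<alpha> \<bullet> xh \<le> \<alpha> \<bullet> x) \<longrightarrow>
        ((u \<bullet> \<alpha>) / norm \<alpha> \<le> (u \<bullet> \<beta>) / (largest_eigenvalue M * sqrt (CARD('n)) / 2)
           \<longleftrightarrow> norm (M *v xh - \<beta>) \<ge> largest_eigenvalue M * sqrt (CARD('n)) / 2)
        \<and> (norm (M *v xh - \<beta>) \<ge> largest_eigenvalue M * sqrt (CARD('n)) / 2 \<longrightarrow>
           (\<exists>x \<in> quad_set M \<beta> \<gamma>. integer_vector x \<and> \<alpha> \<bullet> x - \<alpha> \<bullet> xh \<le> norm \<alpha> * sqrt (CARD('n)))))"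
proof (intro conjI ballI impI allI)
  fix xc assume fr: "xc \<in> frontier (quad_set M \<beta> \<gamma>)"
    and big: "norm (M *v xc - \<beta>) \<ge> largest_eigenvalue M * sqrt (CARD('n)) / 2"
  have "xc \<in> quad_set M \<beta> \<gamma>" using fr frontier_subset_closed[OF quad_closed] by blast
  thus "\<exists>x \<in> quad_set M \<beta> \<gamma>. integer_vector x \<and> norm (x - xc) \<le> sqrt (CARD('n))"
    using near_int[OF n2 par _ big] by blast
next
  fix \<alpha> xh
  assume H: "u \<bullet> \<alpha> > 0 \<and> xh \<in> quad_set M \<beta> \<gamma> \<and> (\<forall>x \<in> quad_set M \<beta> \<gamma>. \<alpha> \<bullet> xh \<le> \<alpha> \<bullet> x)"
  hence ua: "u \<bullet> \<alpha> > 0" and xhS: "xh \<in> quad_set M \<beta> \<gamma>" by auto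
  have W: "norm (M *v xh - \<beta>) = norm \<alpha> * (u \<bullet> \<beta>) / (u \<bullet> \<alpha>)"
    using kkt[OF par u_ker u_pos] H by blast
  define L where "L = largest_eigenvalue M * sqrt (CARD('n)) / 2"
  have L0: "L > 0" using lam_facts(1)[OF n2 par] by (simp add: L_def)
  have na: "norm \<alpha> > 0" using ua by auto
  have ub: "u \<bullet> \<beta> > 0" using u_pos by (simp add: inner_commute)
  have "(u \<bullet> \<alpha>) / norm \<alpha> \<le> (u \<bullet> \<beta>) / L \<longleftrightarrow> (u \<bullet> \<alpha>) * L \<le> (u \<bullet> \<beta>) * norm \<alpha>"
    using L0 na by (simp add: divide_le_eq le_divide_eq field_simps)
  also have "\<dots> \<longleftrightarrow> L \<le> norm \<alpha> * (u \<bullet> \<beta>) / (u \<bullet> \<alpha>)"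
    using ua by (simp add: le_divide_eq mult.commute)
  finally show "(u \<bullet> \<alpha>) / norm \<alpha> \<le> (u \<bullet> \<beta>) / (largest_eigenvalue M * sqrt (CARD('n)) / 2)
           \<longleftrightarrow> norm (M *v xh - \<beta>) \<ge> largest_eigenvalue M * sqrt (CARD('n)) / 2"
    by (simp add: W L_def)
next
  fix \<alpha> xh
  assume H: "u \<bullet> \<alpha> > 0 \<and> xh \<in> quad_set M \<beta> \<gamma> \<and> (\<forall>x \<in> quad_set M \<beta> \<gamma>. \<alpha> \<bullet> xh \<le> \<alpha> \<bullet> x)"
    and big: "norm (M *v xh - \<beta>) \<ge> largest_eigenvalue M * sqrt (CARD('n)) / 2"
  hence xhS: "xh \<in> quad_set M \<beta> \<gamma>" by auto
  obtain x where xS: "x \<in> quad_set M \<beta> \<gamma>" and xi: "integer_vector x" and xd: "norm (x - xh) \<le> sqrt (CARD('n))"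
    using near_int[OF n2 par xhS big] by blast
  have "\<alpha> \<bullet> x - \<alpha> \<bullet> xh = \<alpha> \<bullet> (x - xh)" by (simp add: inner_diff_right)
  also have "\<dots> \<le> norm \<alpha> * norm (x - xh)" by (rule norm_cauchy_schwarz)
  also have "\<dots> \<le> norm \<alpha> * sqrt (CARD('n))" using xd by (simp add: mult_left_mono)
  finally show "\<exists>x \<in> quad_set M \<beta> \<gamma>. integer_vector x \<and> \<alpha> \<bullet> x - \<alpha> \<bullet> xh \<le> norm \<alpha> * sqrt (CARD('n))"
    using xS xi by blast
qed

end
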